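(* Let $\mathbf{A},\mathbf{B},\mathbf{C}$ be trees with $\mathbf{A}$ infinite. If $\mathbf{A}\mathbf{B}=\mathbf{A}\mathbf{C}$, then $\mathbf{B}=\mathbf{C}$.
   Context: A tree is a (possibly empty, possibly infinite) rooted in-tree in which every vertex has finitely many in-neighbours: an acyclic weakly connected digraph with a root having no outgoing arc, every other vertex having exactly one outgoing arc (to its parent), arcs directed towards the root. Trees are considered up to isomorphism. The depth of a vertex is its distance to the root. The product of trees $\mathbf{F},\mathbf{G}$ has vertex set $\{(a,b):\operatorname{depth}(a)=\operatorname{depth}(b)\}$ and an arc $(a,b)\to(a',b')$ whenever $a\to a'$ and $b\to b'$ are arcs of $\mathbf{F}$ and $\mathbf{G}$ respectively. *)

theory Defs
  imports Main
begin

text \<open>A tree is represented by a vertex set V and a partial parent map p: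
  p v = Some u means there is an arc v \<rightarrow> u (u is the parent of v);
  p v = None means v has no outgoing arc. Only the values of p on V matter.\<close>

definition arcs :: "'a set \<Rightarrow> ('a \<Rightarrow> 'a option) \<Rightarrow> ('a \<times> 'a) set" where
  "arcs V p = {(v, u). v \<in> V \<and> p v = Some u}"

definition is_tree :: "'a set \<Rightarrow> ('a \<Rightarrow> 'a option) \<Rightarrow> bool" where
  "is_tree V p \<longleftrightarrow>
     (\<forall>(v, u) \<in> arcs V p. u \<in> V) \<and>
     acyclic (arcs V p) \<and>
     (V \<noteq> {} \<longrightarrow> (\<exists>r \<in> V. p r = None \<and> (\<forall>v \<in> V. (v, r) \<in> (arcs V p)\<^sup>*))) \<and>
     (\<forall>v \<in> V. finite {u \<in> V. p u = Some v})"

definition depth :: "'a set \<Rightarrow> ('a \<Rightarrow> 'a option) \<Rightarrow> 'a \<Rightarrow> nat" where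
  "depth V p v = (LEAST n. \<exists>r \<in> V. p r = None \<and> (v, r) \<in> (arcs V p) ^^ n)"

definition tree_prod_verts ::
  "'a set \<Rightarrow> ('a \<Rightarrow> 'a option) \<Rightarrow> 'b set \<Rightarrow> ('b \<Rightarrow> 'b option) \<Rightarrow> ('a \<times> 'b) set" where
  "tree_prod_verts VF pF VG pG =
     {(a, b). a \<in> VF \<and> b \<in> VG \<and> depth VF pF a = depth VG pG b}"

definition tree_prod_par ::
  "('a \<Rightarrow> 'a option) \<Rightarrow> ('b \<Rightarrow> 'b option) \<Rightarrow> ('a \<times> 'b) \<Rightarrow> ('a \<times> 'b) option" where
  "tree_prod_par pF pG = (\<lambda>(a, b). case (pF a, pG b) of
       (Some a', Some b') \<Rightarrow> Some (a', b')
     | _ \<Rightarrow> None)"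

definition tree_iso ::
  "'a set \<Rightarrow> ('a \<Rightarrow> 'a option) \<Rightarrow> 'b set \<Rightarrow> ('b \<Rightarrow> 'b option) \<Rightarrow> bool" where
  "tree_iso V p W q \<longleftrightarrow>
     (\<exists>f. bij_betw f V W \<and>
          (\<forall>x \<in> V. \<forall>y \<in> V. (x, y) \<in> arcs V p \<longleftrightarrow> (f x, f y) \<in> arcs W q))"

end

theory Submission
  imports Defs "HOL-Library.Multiset" "HOL-Library.FuncSet" "HOL-Library.Infinite_Set"
begin

datatype ftree = FNode (kids: "ftree multiset")

definition conv :: "(ftree \<Rightarrow> ftree \<Rightarrow> ftree) \<Rightarrow> ftree multiset \<Rightarrow> ftree multiset \<Rightarrow> ftree multiset" where
  "conv f W N = \<Sum>\<^sub># (image_mset (\<lambda>u. image_mset (f u) N) W)"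

lemma conv_plus1: "conv f (A + B) N = conv f A N + conv f B N"
  by (simp add: conv_def)

lemma conv_plus2: "conv f W (A + B) = conv f W A + conv f W B"
  by (simp add: conv_def sum_mset.distrib)

lemma conv_empty1[simp]: "conv f {#} N = {#}"
  by (simp add: conv_def)

lemma in_conv: "x \<in># conv f W N \<longleftrightarrow> (\<exists>u\<in>#W. \<exists>v\<in>#N. x = f u v)"
  by (auto simp: conv_def)

lemma conv_cong: "(\<And>u v. u \<in># W \<Longrightarrow> v \<in># N \<Longrightarrow> f u v = g u v) \<Longrightarrow> conv f W N = conv g W N"
  unfolding conv_def by (intro arg_cong[where f=sum_mset] image_mset_cong) auto

lemma image_mset_sum_mset: "image_mset g (\<Sum>\<^sub># MM) = \<Sum>\<^sub># (image_mset (image_mset g) MM)"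
  by (induction MM) auto

lemma image_conv: "image_mset g (conv f W N) = conv (\<lambda>u v. g (f u v)) W N"
  unfolding conv_def by (simp add: image_mset_sum_mset multiset.map_comp o_def)

lemma conv_image: "conv f (image_mset g W) (image_mset h N) = conv (\<lambda>u v. f (g u) (h v)) W N"
  unfolding conv_def by (simp add: multiset.map_comp o_def)

lemma conv_nonempty: "W \<noteq> {#} \<Longrightarrow> N \<noteq> {#} \<Longrightarrow> conv f W N \<noteq> {#}"
  proof -
  assume "W \<noteq> {#}" "N \<noteq> {#}"
  then obtain u v where "u \<in># W" "v \<in># N" by (meson multiset_nonemptyE)
  then have "f u v \<in># conv f W N" unfolding in_conv by blast
  then show ?thesis by auto
qed

primrec trunc :: "nat \<Rightarrow> ftree \<Rightarrow> ftree" where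
  "trunc 0 t = FNode {#}"
| "trunc (Suc n) t = FNode (image_mset (trunc n) (kids t))"

primrec full :: "nat \<Rightarrow> ftree \<Rightarrow> bool" where
  "full 0 t = True"
| "full (Suc n) t = (\<exists>x\<in>#kids t. full n x)"

primrec bnd :: "nat \<Rightarrow> ftree \<Rightarrow> bool" where
  "bnd 0 t = (kids t = {#})"
| "bnd (Suc n) t = (\<forall>x\<in>#kids t. bnd n x)"

primrec tm :: "nat \<Rightarrow> ftree \<Rightarrow> ftree \<Rightarrow> ftree" where
  "tm 0 x y = FNode {#}"
| "tm (Suc n) x y = FNode (conv (tm n) (kids x) (kids y))"

lemma trunc_tm: "k \<le> n \<Longrightarrow> trunc k (tm n x y) = tm k x y"
proof (induction k arbitrary: n x y)
  case 0 then show ?case by simp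
next
  case (Suc k)
  then obtain n' where n: "n = Suc n'" "k \<le> n'" by (cases n) auto
  show ?case using Suc.IH[OF n(2)] by (simp add: n image_conv)
qed

lemma tm_trunc: "tm n x y = tm n (trunc n x) (trunc n y)"
proof (induction n arbitrary: x y)
  case 0 then show ?case by simp
next
  case (Suc n)
  show ?case by (simp add: conv_image Suc.IH[symmetric])
qed

lemma full_trunc: "full m w \<Longrightarrow> m \<le> k \<Longrightarrow> full m (trunc k w)"
proof (induction m arbitrary: k w)
  case 0 then show ?case by simp
next
  case (Suc m)
  then obtain k' where k: "k = Suc k'" "m \<le> k'" by (cases k) auto
  from Suc.prems obtain x where "x \<in># kids w" "full m x" by auto
  then show ?case using Suc.IH[OF _ k(2)] by (auto simp: k)
qed

lemma tm_low: "\<not> full (Suc k) u \<Longrightarrow> tm m u v = tm m u (trunc k v)"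
proof (induction k arbitrary: m u v)
  case 0
  then show ?case by (cases m) (auto simp: conv_def)
next
  case (Suc k)
  note IH = Suc.IH and pr = Suc.prems
  show ?case
  proof (cases m)
    case 0 then show ?thesis by simp
  next
    case (Suc m')
    have "conv (tm m') (kids u) (kids v) = conv (\<lambda>a b. tm m' a (trunc k b)) (kids u) (kids v)"
    proof (rule conv_cong)
      fix a b assume "a \<in># kids u" "b \<in># kids v"
      then have "\<not> full (Suc k) a" using pr by auto
      then show "tm m' a b = tm m' a (trunc k b)" by (rule IH)
    qed
    also have "\<dots> = conv (tm m') (kids u) (image_mset (trunc k) (kids v))"
      using conv_image[of "tm m'" id "kids u" "trunc k" "kids v"] by simp
    finally show ?thesis by (simp add: Suc)
  qed
qed

lemma bnd_trunc: "bnd m (trunc m y)"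
  by (induction m arbitrary: y) auto

lemma full_mono: "full (Suc m) w \<Longrightarrow> full m w"
  by (induction m arbitrary: w) auto


primrec R :: "nat \<Rightarrow> ftree rel" where
  "R 0 = {}"
| "R (Suc m) = {(y, y'). (trunc m y, trunc m y') \<in> R m \<or>
      (trunc m y = trunc m y' \<and> (kids y, kids y') \<in> mult (R m))}"

lemma trans_R: "trans (R m)"
proof (induction m)
  case 0 then show ?case by (simp add: trans_def)
next
  case (Suc m)
  have tm: "trans (mult (R m))" unfolding mult_def by (rule trans_trancl)
  show ?case
    unfolding trans_def
  proof (intro allI impI)
    fix x y z assume xy: "(x, y) \<in> R (Suc m)" and yz: "(y, z) \<in> R (Suc m)"
    from xy yz show "(x, z) \<in> R (Suc m)"
      using Suc.IH tm unfolding trans_def by auto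
  qed
qed

lemma irrefl_R: "irrefl (R m)"
proof (induction m)
  case 0 then show ?case by (simp add: irrefl_def)
next
  case (Suc m)
  have "irrefl (mult (R m))" by (rule irrefl_mult[OF trans_R Suc.IH])
  then show ?case using Suc.IH unfolding irrefl_def by auto
qed

lemma bnd_trunc_id: "bnd m y \<Longrightarrow> trunc m y = y"
proof (induction m arbitrary: y)
  case 0 then show ?case by (cases y) auto
next
  case (Suc m)
  obtain M where y: "y = FNode M" by (cases y)
  have "image_mset (trunc m) M = image_mset id M"
    using Suc by (intro image_mset_cong) (auto simp: y)
  then show ?case by (simp add: y)
qed

lemma total_R: "total_on {y. bnd m y} (R m)"
proof (induction m)
  case 0
  show ?case unfolding total_on_def
  proof (intro ballI impI)
    fix x y assume "x \<in> {y. bnd 0 y}" "y \<in> {y. bnd 0 y}" "x \<noteq> y"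
    then show "(x, y) \<in> R 0 \<or> (y, x) \<in> R 0" by (cases x; cases y) auto
  qed
next
  case (Suc m)
  have tot: "total_on {M. set_mset M \<subseteq> {y. bnd m y}} (mult (R m))"
    by (rule total_on_mult[OF Suc.IH trans_R]) auto
  show ?case unfolding total_on_def
  proof (intro ballI impI)
    fix x y assume x: "x \<in> {y. bnd (Suc m) y}" and y: "y \<in> {y. bnd (Suc m) y}" and ne: "x \<noteq> y"
    show "(x, y) \<in> R (Suc m) \<or> (y, x) \<in> R (Suc m)"
    proof (cases "trunc m x = trunc m y")
      case False
      then have "(trunc m x, trunc m y) \<in> R m \<or> (trunc m y, trunc m x) \<in> R m"
        using Suc.IH bnd_trunc unfolding total_on_def by auto
      then show ?thesis by auto
    next
      case True
      have "kids x \<noteq> kids y" using ne by (cases x; cases y) auto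
      moreover have "kids x \<in> {M. set_mset M \<subseteq> {y. bnd m y}}" "kids y \<in> {M. set_mset M \<subseteq> {y. bnd m y}}"
        using x y by auto
      ultimately have "(kids x, kids y) \<in> mult (R m) \<or> (kids y, kids x) \<in> mult (R m)"
        using tot unfolding total_on_def by blast
      then show ?thesis using True by auto
    qed
  qed
qed


lemma SM: "full m w \<Longrightarrow> (y, y') \<in> R m \<Longrightarrow> (tm m w y, tm m w y') \<in> R m"
proof (induction m arbitrary: w y y')
  case 0 then show ?case by simp
next
  case (Suc m)
  note IH = Suc.IH
  have fw: "full m (trunc m w)" using Suc.prems(1) full_mono full_trunc by blast
  have tr: "trunc m (tm (Suc m) w z) = tm m (trunc m w) (trunc m z)" for z
    using trunc_tm[of m "Suc m" w z] tm_trunc[of m w z] by simp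
  from Suc.prems(2) consider (A) "(trunc m y, trunc m y') \<in> R m"
    | (B) "trunc m y = trunc m y'" "(kids y, kids y') \<in> mult (R m)" by auto
  then show ?case
  proof cases
    case A
    then show ?thesis using IH[OF fw A] tr by simp
  next
    case B
    obtain I J K where IJK: "kids y' = I + J" "kids y = I + K" "J \<noteq> {#}"
      "\<forall>k\<in>#K. \<exists>j\<in>#J. (k, j) \<in> R m"
      using mult_implies_one_step[OF trans_R B(2)] by blast
    define W where "W = kids w"
    define Wf where "Wf = filter_mset (full m) W"
    define Wl where "Wl = filter_mset (\<lambda>u. \<not> full m u) W"
    have W: "W = Wf + Wl" unfolding Wf_def Wl_def by (rule multiset_partition)
    have low: "conv (tm m) Wl K = conv (tm m) Wl J"
    proof (cases m)
      case 0 then show ?thesis by (simp add: Wl_def)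
    next
      case (Suc m')
      have "image_mset (trunc m') (kids y) = image_mset (trunc m') (kids y')"
        using B(1) Suc by simp
      then have KJ: "image_mset (trunc m') K = image_mset (trunc m') J"
        using IJK by simp
      have e: "conv (tm m) Wl X = conv (tm m) Wl (image_mset (trunc m') X)" for X
      proof -
        have "conv (tm m) Wl X = conv (\<lambda>a b. tm m a (trunc m' b)) Wl X"
        proof (rule conv_cong)
          fix a b assume "a \<in># Wl" "b \<in># X"
          then have "\<not> full (Suc m') a" using Suc by (simp add: Wl_def)
          then show "tm m a b = tm m a (trunc m' b)" by (rule tm_low)
        qed
        also have "\<dots> = conv (tm m) Wl (image_mset (trunc m') X)"
          using conv_image[of "tm m" id Wl "trunc m'" X] by simp
        finally show ?thesis .
      qed
      show ?thesis using e[of K] e[of J] KJ by simp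
    qed
    define I' where "I' = conv (tm m) W I + conv (tm m) Wl J"
    have k1: "kids (tm (Suc m) w y) = I' + conv (tm m) Wf K"
      unfolding I'_def using IJK(2) W low
      by (simp add: W_def[symmetric] conv_plus1 conv_plus2 ac_simps)
    have k2: "kids (tm (Suc m) w y') = I' + conv (tm m) Wf J"
      unfolding I'_def using IJK(1) W
      by (simp add: W_def[symmetric] conv_plus1 conv_plus2 ac_simps)
    have "Wf \<noteq> {#}" using Suc.prems(1) by (auto simp: Wf_def W_def)
    then have ne: "conv (tm m) Wf J \<noteq> {#}" using IJK(3) by (rule conv_nonempty)
    have st: "\<forall>k\<in>#conv (tm m) Wf K. \<exists>j\<in>#conv (tm m) Wf J. (k, j) \<in> R m"
    proof
      fix k' assume "k' \<in># conv (tm m) Wf K"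
      then obtain u k where u: "u \<in># Wf" "k \<in># K" "k' = tm m u k" unfolding in_conv by blast
      then obtain j where j: "j \<in># J" "(k, j) \<in> R m" using IJK(4) by blast
      have "full m u" using u by (simp add: Wf_def)
      then have "(tm m u k, tm m u j) \<in> R m" using IH j(2) by blast
      moreover have "tm m u j \<in># conv (tm m) Wf J" unfolding in_conv using u j by blast
      ultimately show "\<exists>j\<in>#conv (tm m) Wf J. (k', j) \<in> R m" using u by blast
    qed
    have "(kids (tm (Suc m) w y), kids (tm (Suc m) w y')) \<in> mult (R m)"
      unfolding k1 k2 by (rule one_step_implies_mult[OF ne st])
    moreover have "trunc m (tm (Suc m) w y) = trunc m (tm (Suc m) w y')"
      using tr B(1) by simp
    ultimately show ?thesis by simp
  qed
qed

lemma cancel: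
  assumes "full n a" "bnd n b" "bnd n c" "tm n a b = tm n a c"
  shows "b = c"
proof (rule ccontr)
  assume "b \<noteq> c"
  then have "(b, c) \<in> R n \<or> (c, b) \<in> R n"
    using total_R[of n] assms(2,3) unfolding total_on_def by auto
  then have "(tm n a b, tm n a c) \<in> R n \<or> (tm n a c, tm n a b) \<in> R n"
    using SM[OF assms(1)] by blast
  then show False using irrefl_R[of n] assms(4) unfolding irrefl_def by auto
qed


definition ch :: "'a set \<Rightarrow> ('a \<Rightarrow> 'a option) \<Rightarrow> 'a \<Rightarrow> 'a set" where
  "ch V p v = {u \<in> V. p u = Some v}"

primrec ttyp :: "'a set \<Rightarrow> ('a \<Rightarrow> 'a option) \<Rightarrow> nat \<Rightarrow> 'a \<Rightarrow> ftree" where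
  "ttyp V p 0 v = FNode {#}"
| "ttyp V p (Suc n) v = FNode (image_mset (ttyp V p n) (mset_set (ch V p v)))"

lemma bnd_typ: "bnd n (ttyp V p n v)"
  by (induction n arbitrary: v) auto

lemma typ_trunc: "n \<le> N \<Longrightarrow> trunc n (ttyp V p N v) = ttyp V p n v"
proof (induction n arbitrary: N v)
  case 0 then show ?case by simp
next
  case (Suc n)
  then obtain N' where N: "N = Suc N'" "n \<le> N'" by (cases N) auto
  show ?case using Suc.IH[OF N(2)] by (simp add: N multiset.map_comp o_def)
qed

definition rt :: "'a set \<Rightarrow> ('a \<Rightarrow> 'a option) \<Rightarrow> 'a" where
  "rt V p = (THE r. r \<in> V \<and> p r = None)"

locale tr =
  fixes V :: "'a set" and p :: "'a \<Rightarrow> 'a option"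
  assumes tree: "is_tree V p"
begin

abbreviation "E \<equiv> arcs V p"
abbreviation "r \<equiv> rt V p"

lemma E_iff: "(v, u) \<in> E \<longleftrightarrow> v \<in> V \<and> p v = Some u"
  by (simp add: arcs_def)

lemma par_in: "v \<in> V \<Longrightarrow> p v = Some u \<Longrightarrow> u \<in> V"
  using tree unfolding is_tree_def arcs_def by auto

lemma ch_sub: "ch V p v \<subseteq> V" by (auto simp: ch_def)

lemma ch_fin: "finite (ch V p v)"
proof (cases "v \<in> V")
  case True then show ?thesis using tree unfolding is_tree_def ch_def by auto
next
  case False
  then have "ch V p v = {}" using par_in by (auto simp: ch_def)
  then show ?thesis by simp
qed

lemma root_ex: "V \<noteq> {} \<Longrightarrow> \<exists>r\<in>V. p r = None \<and> (\<forall>v\<in>V. (v, r) \<in> E\<^sup>*)"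
  using tree unfolding is_tree_def by blast

lemma root_uniq: assumes "r1 \<in> V" "p r1 = None" "r2 \<in> V" "p r2 = None" shows "r1 = r2"
proof -
  obtain r where r: "r \<in> V" "p r = None" "\<forall>v\<in>V. (v, r) \<in> E\<^sup>*" using root_ex assms by blast
  have "r1 = r" if "r1 \<in> V" "p r1 = None" for r1
  proof -
    have "(r1, r) \<in> E\<^sup>*" using r that by blast
    then show ?thesis using that by (cases rule: converse_rtranclE) (auto simp: E_iff)
  qed
  then show ?thesis using assms by metis
qed

lemma root: "V \<noteq> {} \<Longrightarrow> r \<in> V \<and> p r = None \<and> (\<forall>v\<in>V. (v, r) \<in> E\<^sup>*)"
proof -
  assume "V \<noteq> {}"
  then obtain r0 where r0: "r0 \<in> V" "p r0 = None" "\<forall>v\<in>V. (v, r0) \<in> E\<^sup>*" using root_ex by blast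
  have "r = r0" unfolding rt_def
    by (rule the_equality) (use r0 root_uniq in auto)
  then show ?thesis using r0 by simp
qed

lemma is_root: "v \<in> V \<Longrightarrow> p v = None \<Longrightarrow> v = r"
  using root root_uniq by blast

lemma relpow_det: "(v, x) \<in> E ^^ n \<Longrightarrow> (v, y) \<in> E ^^ n \<Longrightarrow> x = y"
proof (induction n arbitrary: v)
  case 0 then show ?case by simp
next
  case (Suc n)
  from Suc.prems(1) obtain a where a: "(v, a) \<in> E" "(a, x) \<in> E ^^ n" by (blast dest: relpow_Suc_D2)
  from Suc.prems(2) obtain b where b: "(v, b) \<in> E" "(b, y) \<in> E ^^ n" by (blast dest: relpow_Suc_D2)
  have "a = b" using a(1) b(1) by (auto simp: E_iff)
  then show ?case using Suc.IH a(2) b(2) by blast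
qed

lemma relpow_V: "(v, x) \<in> E ^^ n \<Longrightarrow> v \<in> V \<Longrightarrow> x \<in> V"
proof (induction n arbitrary: x)
  case 0 then show ?case by simp
next
  case (Suc n)
  then obtain y where "(v, y) \<in> E ^^ n" "(y, x) \<in> E" by (blast elim: relpow_Suc_E)
  then show ?case using Suc par_in by (auto simp: E_iff)
qed

lemma len_unique:
  assumes "V \<noteq> {}" "(v, r) \<in> E ^^ n" "(v, r) \<in> E ^^ m" shows "n = m"
proof (rule ccontr)
  assume "n \<noteq> m"
  have *: False if h: "(v, r) \<in> E ^^ a" "(v, r) \<in> E ^^ b" "a < b" for a b
  proof -
    have "(v, r) \<in> E ^^ (a + (b - a))" using h by simp
    then obtain z where z: "(v, z) \<in> E ^^ a" "(z, r) \<in> E ^^ (b - a)"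
      unfolding relpow_add by blast
    have "z = r" using relpow_det z(1) h(1) by blast
    obtain k where k: "b - a = Suc k" using h(3) by (cases "b - a") auto
    have "(z, r) \<in> E ^^ Suc k" using z(2) k by simp
    then obtain y where "(z, y) \<in> E" by (blast dest: relpow_Suc_D2)
    then show False using root[OF assms(1)] \<open>z = r\<close> by (auto simp: E_iff)
  qed
  show False using *[of n m] *[of m n] assms \<open>n \<noteq> m\<close> by linarith
qed

lemma to_root: "v \<in> V \<Longrightarrow> \<exists>n. (v, r) \<in> E ^^ n"
  using root rtrancl_power by blast

lemma depth_eq: assumes "v \<in> V" "(v, r) \<in> E ^^ n" shows "depth V p v = n"
  unfolding depth_def
proof (rule Least_equality)
  show "\<exists>r\<in>V. p r = None \<and> (v, r) \<in> E ^^ n" using assms root by blast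
next
  fix m assume "\<exists>r\<in>V. p r = None \<and> (v, r) \<in> E ^^ m"
  then obtain r' where "r' \<in> V" "p r' = None" "(v, r') \<in> E ^^ m" by blast
  then have "(v, r) \<in> E ^^ m" using is_root by blast
  then show "n \<le> m" using len_unique assms by fastforce
qed

lemma depth_path: "v \<in> V \<Longrightarrow> (v, r) \<in> E ^^ depth V p v"
  using to_root depth_eq by metis

lemma depth_child: "u \<in> V \<Longrightarrow> p u = Some v \<Longrightarrow> depth V p u = Suc (depth V p v)"
proof -
  assume u: "u \<in> V" "p u = Some v"
  then have v: "v \<in> V" using par_in by blast
  have "(u, r) \<in> E ^^ Suc (depth V p v)"
    using relpow_Suc_I2[of u v E r] u depth_path[OF v] by (simp add: E_iff)
  then show ?thesis using depth_eq u by blast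
qed

lemma depth_root: "V \<noteq> {} \<Longrightarrow> depth V p r = 0"
  using depth_eq root by (meson relpow_0_I)

lemma depth0: "v \<in> V \<Longrightarrow> depth V p v = 0 \<Longrightarrow> v = r"
  using depth_path by fastforce

lemma nonroot: "v \<in> V \<Longrightarrow> v \<noteq> r \<Longrightarrow> \<exists>u. p v = Some u"
  using is_root by blast

lemma deep_ex:
  assumes "infinite V" shows "\<exists>w\<in>V. (w, r) \<in> E ^^ n"
proof (rule ccontr)
  assume no: "\<not> ?thesis"
  have ne: "V \<noteq> {}" using assms by auto
  define L where "L k = {v \<in> V. (v, r) \<in> E ^^ k}" for k
  have finL: "finite (L k)" for k
  proof (induction k)
    case 0 then show ?case by (auto simp: L_def)
  next
    case (Suc k)
    have "L (Suc k) \<subseteq> (\<Union>w\<in>L k. ch V p w)"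
    proof
      fix v assume "v \<in> L (Suc k)"
      then have v: "v \<in> V" "(v, r) \<in> E ^^ Suc k" by (auto simp: L_def)
      then obtain w where "(v, w) \<in> E" "(w, r) \<in> E ^^ k" by (blast dest: relpow_Suc_D2)
      then show "v \<in> (\<Union>w\<in>L k. ch V p w)"
        using par_in by (auto simp: L_def ch_def E_iff)
    qed
    then show ?case using Suc ch_fin by (meson finite_UN_I finite_subset)
  qed
  have "V \<subseteq> (\<Union>k<n. L k)"
  proof
    fix v assume v: "v \<in> V"
    then obtain d where d: "(v, r) \<in> E ^^ d" using to_root by blast
    have "d < n"
    proof (rule ccontr)
      assume "\<not> d < n"
      then have "(v, r) \<in> E ^^ ((d - n) + n)" using d by simp
      then obtain w where "(v, w) \<in> E ^^ (d - n)" "(w, r) \<in> E ^^ n" unfolding relpow_add by blast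
      then show False using no relpow_V v by blast
    qed
    then show "v \<in> (\<Union>k<n. L k)" using v d by (auto simp: L_def)
  qed
  then have "finite V" using finL by (meson finite_UN_I finite_lessThan finite_subset)
  then show False using assms by simp
qed

lemma full_typ: "(w, v) \<in> E ^^ n \<Longrightarrow> w \<in> V \<Longrightarrow> full n (ttyp V p n v)"
proof (induction n arbitrary: v)
  case 0 then show ?case by simp
next
  case (Suc n)
  then obtain z where z: "(w, z) \<in> E ^^ n" "(z, v) \<in> E" by (blast elim: relpow_Suc_E)
  have "z \<in> ch V p v" using z(2) by (auto simp: ch_def E_iff)
  moreover have "full n (ttyp V p n z)" using Suc.IH z(1) Suc.prems(2) by blast
  ultimately show ?case using ch_fin by auto
qed

lemma full_root: "infinite V \<Longrightarrow> full n (ttyp V p n r)"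
  using deep_ex full_typ by blast

end


lemma par_prod: "tree_prod_par pA pB (x, y) = Some (a, b) \<longleftrightarrow> pA x = Some a \<and> pB y = Some b"
  by (auto simp: tree_prod_par_def split: option.splits)

lemma par_prod_None: "tree_prod_par pA pB (x, y) = None \<longleftrightarrow> pA x = None \<or> pB y = None"
  by (auto simp: tree_prod_par_def split: option.splits)

lemma ch_prod:
  assumes A: "tr VA pA" and B: "tr VB pB"
    and ab: "(a, b) \<in> tree_prod_verts VA pA VB pB"
  shows "ch (tree_prod_verts VA pA VB pB) (tree_prod_par pA pB) (a, b) = ch VA pA a \<times> ch VB pB b"
proof -
  have d: "depth VA pA a = depth VB pB b" using ab by (simp add: tree_prod_verts_def)
  show ?thesis
  proof (intro set_eqI iffI)
    fix z assume "z \<in> ch (tree_prod_verts VA pA VB pB) (tree_prod_par pA pB) (a, b)"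
    then show "z \<in> ch VA pA a \<times> ch VB pB b"
      by (cases z) (auto simp: ch_def tree_prod_verts_def par_prod)
  next
    fix z assume "z \<in> ch VA pA a \<times> ch VB pB b"
    then obtain x y where z: "z = (x, y)" "x \<in> VA" "pA x = Some a" "y \<in> VB" "pB y = Some b"
      by (auto simp: ch_def)
    have "depth VA pA x = depth VB pB y"
      using tr.depth_child[OF A z(2,3)] tr.depth_child[OF B z(4,5)] d by simp
    then show "z \<in> ch (tree_prod_verts VA pA VB pB) (tree_prod_par pA pB) (a, b)"
      using z by (auto simp: ch_def tree_prod_verts_def par_prod)
  qed
qed

lemma mset_set_times:
  assumes "finite X" "finite Y"
  shows "mset_set (X \<times> Y) = \<Sum>\<^sub># (image_mset (\<lambda>x. image_mset (Pair x) (mset_set Y)) (mset_set X))"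
  using assms(1)
proof (induction X rule: finite_induct)
  case empty then show ?case by simp
next
  case (insert x X)
  have "insert x X \<times> Y = (Pair x ` Y) \<union> (X \<times> Y)" by auto
  moreover have "(Pair x ` Y) \<inter> (X \<times> Y) = {}" using insert by auto
  ultimately have "mset_set (insert x X \<times> Y) = mset_set (Pair x ` Y) + mset_set (X \<times> Y)"
    using insert assms(2) by (simp add: mset_set_Union)
  also have "mset_set (Pair x ` Y) = image_mset (Pair x) (mset_set Y)"
    by (rule image_mset_mset_set[symmetric]) (simp add: inj_on_def)
  finally show ?case using insert by simp
qed

lemma typ_prod:
  assumes A: "tr VA pA" and B: "tr VB pB"
  shows "(a, b) \<in> tree_prod_verts VA pA VB pB \<Longrightarrow>
    ttyp (tree_prod_verts VA pA VB pB) (tree_prod_par pA pB) n (a, b) = tm n (ttyp VA pA n a) (ttyp VB pB n b)"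
proof (induction n arbitrary: a b)
  case 0 then show ?case by simp
next
  case (Suc n)
  let ?P = "tree_prod_verts VA pA VB pB" and ?q = "tree_prod_par pA pB"
  have ch: "ch ?P ?q (a, b) = ch VA pA a \<times> ch VB pB b" by (rule ch_prod[OF A B Suc.prems])
  have fin: "finite (ch VA pA a)" "finite (ch VB pB b)" using tr.ch_fin[OF A] tr.ch_fin[OF B] by auto
  have mem: "(x, y) \<in> ?P" if "x \<in> ch VA pA a" "y \<in> ch VB pB b" for x y
    using that ch by (auto simp: ch_def)
  have "image_mset (ttyp ?P ?q n) (mset_set (ch ?P ?q (a, b)))
     = \<Sum>\<^sub># (image_mset (\<lambda>x. image_mset (\<lambda>y. ttyp ?P ?q n (x, y)) (mset_set (ch VB pB b))) (mset_set (ch VA pA a)))"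
    unfolding ch mset_set_times[OF fin] image_mset_sum_mset by (simp add: multiset.map_comp o_def)
  also have "\<dots> = \<Sum>\<^sub># (image_mset (\<lambda>x. image_mset (\<lambda>y. tm n (ttyp VA pA n x) (ttyp VB pB n y)) (mset_set (ch VB pB b))) (mset_set (ch VA pA a)))"
    using fin by (intro arg_cong[where f=sum_mset] image_mset_cong) (auto simp: Suc.IH mem)
  also have "\<dots> = conv (tm n) (image_mset (ttyp VA pA n) (mset_set (ch VA pA a))) (image_mset (ttyp VB pB n) (mset_set (ch VB pB b)))"
    by (simp add: conv_def multiset.map_comp o_def)
  finally show ?case by simp
qed

lemma typ_iso:
  assumes f: "bij_betw f V W" and arc: "\<forall>x\<in>V. \<forall>y\<in>V. (x, y) \<in> arcs V p \<longleftrightarrow> (f x, f y) \<in> arcs W q"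
  shows "v \<in> V \<Longrightarrow> ttyp W q n (f v) = ttyp V p n v"
proof (induction n arbitrary: v)
  case 0 then show ?case by simp
next
  case (Suc n)
  have chV: "ch V p v \<subseteq> V" by (auto simp: ch_def)
  have e: "ch W q (f v) = f ` ch V p v"
  proof (intro set_eqI iffI)
    fix u' assume "u' \<in> ch W q (f v)"
    then have u': "u' \<in> W" "q u' = Some (f v)" by (auto simp: ch_def)
    then obtain u where u: "u \<in> V" "u' = f u" using f by (auto simp: bij_betw_def)
    then have "(f u, f v) \<in> arcs W q" using u' by (simp add: arcs_def)
    then have "(u, v) \<in> arcs V p" using arc u Suc.prems by blast
    then show "u' \<in> f ` ch V p v" using u by (auto simp: ch_def arcs_def)
  next
    fix u' assume "u' \<in> f ` ch V p v"
    then obtain u where u: "u \<in> V" "p u = Some v" "u' = f u" by (auto simp: ch_def)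
    then have "(u, v) \<in> arcs V p" by (simp add: arcs_def)
    then have "(f u, f v) \<in> arcs W q" using arc u Suc.prems by blast
    then show "u' \<in> ch W q (f v)" using u by (auto simp: ch_def arcs_def)
  qed
  have inj: "inj_on f (ch V p v)" using f chV by (meson bij_betw_def inj_on_subset)
  have "image_mset (ttyp W q n) (mset_set (ch W q (f v))) = image_mset (\<lambda>u. ttyp W q n (f u)) (mset_set (ch V p v))"
    unfolding e image_mset_mset_set[OF inj, symmetric] by (simp add: multiset.map_comp o_def)
  also have "\<dots> = image_mset (ttyp V p n) (mset_set (ch V p v))"
  proof (rule image_mset_cong)
    fix x assume "x \<in># mset_set (ch V p v)"
    then have "x \<in> ch V p v" by (cases "finite (ch V p v)") auto
    then show "ttyp W q n (f x) = ttyp V p n x" using Suc.IH chV by blast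
  qed
  finally show ?case by simp
qed

lemma mset_bij:
  assumes "finite X" "finite Y" "image_mset f (mset_set X) = image_mset g (mset_set Y)"
  shows "\<exists>\<sigma>. bij_betw \<sigma> X Y \<and> (\<forall>x\<in>X. g (\<sigma> x) = f x)"
  using assms
proof (induction X arbitrary: Y rule: finite_induct)
  case empty
  then have "Y = {}" by (simp add: mset_set_empty_iff)
  then show ?case by (intro exI[of _ "\<lambda>_. undefined"]) (simp add: bij_betw_def)
next
  case (insert x X)
  have "f x \<in># image_mset g (mset_set Y)" using insert.prems(2) insert.hyps
    by (metis image_mset_add_mset mset_set.insert union_single_eq_member)
  then obtain y where y: "y \<in> Y" "g y = f x" using insert.prems by auto
  have "mset_set Y = add_mset y (mset_set (Y - {y}))" using y insert.prems by (simp add: mset_set.remove)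
  then have "image_mset f (mset_set X) = image_mset g (mset_set (Y - {y}))"
    using insert y by simp
  then obtain \<sigma> where s: "bij_betw \<sigma> X (Y - {y})" "\<forall>x\<in>X. g (\<sigma> x) = f x"
    using insert.IH insert.prems by blast
  define \<tau> where "\<tau> = \<sigma>(x := y)"
  have "bij_betw \<tau> X (Y - {y})" using s(1) insert.hyps(2) unfolding \<tau>_def
    by (metis bij_betw_cong fun_upd_other)
  then have "bij_betw \<tau> (X \<union> {x}) ((Y - {y}) \<union> {\<tau> x})"
    using insert.hyps(2) notIn_Un_bij_betw3[of x X \<tau> "Y - {y}"] by (simp add: \<tau>_def)
  then have "bij_betw \<tau> (insert x X) (insert y (Y - {y}))" by (simp add: \<tau>_def)
  moreover have "insert y (Y - {y}) = Y" using y by auto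
  moreover have "\<forall>z\<in>insert x X. g (\<tau> z) = f z" using s(2) y insert.hyps(2) by (auto simp: \<tau>_def)
  ultimately show ?case by metis
qed


primrec gg :: "('b \<Rightarrow> 'c \<Rightarrow> 'b \<Rightarrow> 'c) \<Rightarrow> 'c \<Rightarrow> ('b \<Rightarrow> 'b option) \<Rightarrow> nat \<Rightarrow> 'b \<Rightarrow> 'c" where
  "gg S c0 p 0 b = c0"
| "gg S c0 p (Suc n) b = S (the (p b)) (gg S c0 p n (the (p b))) b"

lemma iso_from_types:
  assumes B: "tr VB pB" and C: "tr VC pC" and neB: "VB \<noteq> {}" and neC: "VC \<noteq> {}"
    and eq: "\<forall>n. ttyp VB pB n (rt VB pB) = ttyp VC pC n (rt VC pC)"
  shows "tree_iso VB pB VC pC"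
proof -
  interpret B: tr VB pB by (rule B)
  interpret C: tr VC pC by (rule C)
  define rB where "rB = rt VB pB"
  define rC where "rC = rt VC pC"
  have rB: "rB \<in> VB" "pB rB = None" "depth VB pB rB = 0"
    using B.root[OF neB] B.depth_root[OF neB] by (auto simp: rB_def)
  have rC: "rC \<in> VC" "pC rC = None" "depth VC pC rC = 0"
    using C.root[OF neC] C.depth_root[OF neC] by (auto simp: rC_def)
  define rel where "rel b c \<longleftrightarrow> b \<in> VB \<and> c \<in> VC \<and> (\<forall>n. ttyp VB pB n b = ttyp VC pC n c)" for b c
  have ext: "\<exists>\<sigma>. bij_betw \<sigma> (ch VB pB b) (ch VC pC c) \<and> (\<forall>b'\<in>ch VB pB b. rel b' (\<sigma> b'))"
    if rbc: "rel b c" for b c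
  proof -
    define X where "X = ch VB pB b"
    define Y where "Y = ch VC pC c"
    have fX: "finite X" and fY: "finite Y" using B.ch_fin C.ch_fin by (auto simp: X_def Y_def)
    define S where "S = {\<sigma>. bij_betw \<sigma> X Y \<and> \<sigma> \<in> extensional X}"
    have finS: "finite S"
    proof (rule finite_subset)
      show "S \<subseteq> PiE X (\<lambda>_. Y)" unfolding S_def PiE_def bij_betw_def by blast
      show "finite (PiE X (\<lambda>_. Y))" using fX fY by (intro finite_PiE) auto
    qed
    have exn: "\<exists>\<sigma>. \<sigma> \<in> S \<and> (\<forall>x\<in>X. ttyp VC pC n (\<sigma> x) = ttyp VB pB n x)" for n
    proof -
      have "ttyp VB pB (Suc n) b = ttyp VC pC (Suc n) c" using rbc unfolding rel_def by blast
      then have "FNode (image_mset (ttyp VB pB n) (mset_set (ch VB pB b))) = FNode (image_mset (ttyp VC pC n) (mset_set (ch VC pC c)))"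
        by (simp only: ttyp.simps)
      then have "image_mset (ttyp VB pB n) (mset_set X) = image_mset (ttyp VC pC n) (mset_set Y)"
        unfolding X_def Y_def by (simp only: ftree.inject)
      then obtain \<sigma> where s: "bij_betw \<sigma> X Y" "\<forall>x\<in>X. ttyp VC pC n (\<sigma> x) = ttyp VB pB n x"
        using mset_bij[OF fX fY] by blast
      have "bij_betw (restrict \<sigma> X) X Y = bij_betw \<sigma> X Y" by (rule bij_betw_cong) simp
      then have "bij_betw (restrict \<sigma> X) X Y" using s(1) by simp
      then have "restrict \<sigma> X \<in> S" by (simp add: S_def)
      moreover have "\<forall>x\<in>X. ttyp VC pC n (restrict \<sigma> X x) = ttyp VB pB n x" using s(2) by simp
      ultimately show ?thesis by blast
    qed
    define s where "s n = (SOME \<sigma>. \<sigma> \<in> S \<and> (\<forall>x\<in>X. ttyp VC pC n (\<sigma> x) = ttyp VB pB n x))" for n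
    have s: "s n \<in> S \<and> (\<forall>x\<in>X. ttyp VC pC n (s n x) = ttyp VB pB n x)" for n
      unfolding s_def by (rule someI_ex[OF exn])
    have "finite (range s)" by (rule finite_subset[OF _ finS]) (use s in auto)
    then obtain n0 where n0: "infinite {n. s n = s n0}"
      using pigeonhole_infinite[of "UNIV :: nat set" s] by auto
    define \<sigma> where "\<sigma> = s n0"
    have bij: "bij_betw \<sigma> X Y" using s[of n0] by (simp add: \<sigma>_def S_def)
    have "rel x (\<sigma> x)" if x: "x \<in> X" for x
    proof -
      have "ttyp VB pB n x = ttyp VC pC n (\<sigma> x)" for n
      proof -
        obtain N where N: "N \<ge> n" "s N = s n0" using n0 unfolding infinite_nat_iff_unbounded_le by auto
        have "ttyp VC pC N (\<sigma> x) = ttyp VB pB N x" using s[of N] N(2) x by (simp add: \<sigma>_def)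
        then have "trunc n (ttyp VC pC N (\<sigma> x)) = trunc n (ttyp VB pB N x)" by simp
        then show ?thesis using typ_trunc[OF N(1), of VC pC "\<sigma> x"] typ_trunc[OF N(1), of VB pB x] by simp
      qed
      moreover have "x \<in> VB" using x by (auto simp: X_def ch_def)
      moreover have "\<sigma> x \<in> VC" using bij x by (auto simp: Y_def ch_def bij_betw_def)
      ultimately show ?thesis by (simp add: rel_def)
    qed
    then show ?thesis using bij by (auto simp: X_def Y_def)
  qed
  define Sg where "Sg b c = (SOME \<sigma>. bij_betw \<sigma> (ch VB pB b) (ch VC pC c) \<and> (\<forall>b'\<in>ch VB pB b. rel b' (\<sigma> b')))" for b c
  have Sg: "bij_betw (Sg b c) (ch VB pB b) (ch VC pC c) \<and> (\<forall>b'\<in>ch VB pB b. rel b' (Sg b c b'))"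
    if "rel b c" for b c
    unfolding Sg_def by (rule someI_ex[OF ext[OF that]])
  define g where "g b = gg Sg rC pB (depth VB pB b) b" for b
  have g_root: "g rB = rC" using rB by (simp add: g_def)
  have g_child: "g b = Sg pb (g pb) b" if "b \<in> VB" "pB b = Some pb" for b pb
    using that B.depth_child[OF that] by (simp add: g_def)
  have rel_g: "\<forall>b\<in>VB. depth VB pB b = k \<longrightarrow> rel b (g b)" for k
  proof (induction k)
    case 0
    show ?case
    proof (intro ballI impI)
      fix b assume "b \<in> VB" "depth VB pB b = 0"
      then have "b = rB" using B.depth0 rB_def by blast
      then show "rel b (g b)" using rB rC g_root eq by (simp add: rel_def rB_def rC_def)
    qed
  next
    case (Suc k)
    show ?case
    proof (intro ballI impI)
      fix b assume b: "b \<in> VB" "depth VB pB b = Suc k"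
      then have "b \<noteq> rB" using rB by auto
      then obtain pb where pb: "pB b = Some pb" using B.nonroot b rB_def by blast
      have pbV: "pb \<in> VB" using B.par_in b pb by blast
      have "depth VB pB pb = k" using B.depth_child[OF b(1) pb] b by simp
      then have "rel pb (g pb)" using Suc pbV by blast
      moreover have "b \<in> ch VB pB pb" using b pb by (simp add: ch_def)
      ultimately have "rel b (Sg pb (g pb) b)" using Sg by blast
      then show "rel b (g b)" using g_child[OF b(1) pb] by simp
    qed
  qed
  have relg: "rel b (g b)" if "b \<in> VB" for b using rel_g that by blast
  have g_ch: "g b \<in> ch VC pC (g pb)" if b: "b \<in> VB" "pB b = Some pb" for b pb
  proof -
    have pbV: "pb \<in> VB" using B.par_in b by blast
    have "b \<in> ch VB pB pb" using b by (simp add: ch_def)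
    then show ?thesis using Sg[OF relg[OF pbV]] g_child[OF b] by (metis bij_betw_apply)
  qed
  have g_depth: "\<forall>b\<in>VB. depth VB pB b = k \<longrightarrow> depth VC pC (g b) = k" for k
  proof (induction k)
    case 0 then show ?case using B.depth0 rB_def g_root rC by auto
  next
    case (Suc k)
    show ?case
    proof (intro ballI impI)
      fix b assume b: "b \<in> VB" "depth VB pB b = Suc k"
      then have "b \<noteq> rB" using rB by auto
      then obtain pb where pb: "pB b = Some pb" using B.nonroot b rB_def by blast
      have pbV: "pb \<in> VB" using B.par_in b pb by blast
      have "depth VB pB pb = k" using B.depth_child[OF b(1) pb] b by simp
      then have "depth VC pC (g pb) = k" using Suc pbV by blast
      moreover have "g b \<in> ch VC pC (g pb)" using g_ch b pb by blast
      ultimately show "depth VC pC (g b) = Suc k" using C.depth_child by (auto simp: ch_def)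
    qed
  qed
  have gdep: "depth VC pC (g b) = depth VB pB b" if "b \<in> VB" for b using g_depth that by blast
  have gV: "g b \<in> VC" if "b \<in> VB" for b using relg[OF that] by (simp add: rel_def)
  have inj_k: "\<forall>b1\<in>VB. \<forall>b2\<in>VB. depth VB pB b1 = k \<longrightarrow> g b1 = g b2 \<longrightarrow> b1 = b2" for k
  proof (induction k)
    case 0
    show ?case
    proof (intro ballI impI)
      fix b1 b2 assume b: "b1 \<in> VB" "b2 \<in> VB" "depth VB pB b1 = 0" "g b1 = g b2"
      have "depth VB pB b2 = 0" using gdep b by metis
      then show "b1 = b2" using B.depth0 b by metis
    qed
  next
    case (Suc k)
    show ?case
    proof (intro ballI impI)
      fix b1 b2 assume b: "b1 \<in> VB" "b2 \<in> VB" "depth VB pB b1 = Suc k" "g b1 = g b2"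
      have d2: "depth VB pB b2 = Suc k" using gdep b by metis
      have "b1 \<noteq> rB" "b2 \<noteq> rB" using rB b d2 by auto
      then obtain p1 p2 where p: "pB b1 = Some p1" "pB b2 = Some p2" using B.nonroot b rB_def by blast
      have pV: "p1 \<in> VB" "p2 \<in> VB" using B.par_in b p by blast+
      have "depth VB pB p1 = k" using B.depth_child[OF b(1) p(1)] b by simp
      moreover have "g p1 = g p2" using g_ch[OF b(1) p(1)] g_ch[OF b(2) p(2)] b(4) by (simp add: ch_def)
      ultimately have "p1 = p2" using Suc pV by blast
      moreover have "b1 \<in> ch VB pB p1" "b2 \<in> ch VB pB p2" using b p by (auto simp: ch_def)
      moreover have "inj_on (Sg p1 (g p1)) (ch VB pB p1)" using Sg[OF relg[OF pV(1)]] by (simp add: bij_betw_def)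
      ultimately show "b1 = b2" using g_child[OF b(1) p(1)] g_child[OF b(2) p(2)] b(4)
        by (metis inj_onD)
    qed
  qed
  have inj: "inj_on g VB" unfolding inj_on_def using inj_k by blast
  have surj_k: "\<forall>c\<in>VC. depth VC pC c = k \<longrightarrow> c \<in> g ` VB" for k
  proof (induction k)
    case 0 then show ?case using C.depth0 rC_def g_root rB by auto
  next
    case (Suc k)
    show ?case
    proof (intro ballI impI)
      fix c assume c: "c \<in> VC" "depth VC pC c = Suc k"
      then have "c \<noteq> rC" using rC by auto
      then obtain pc where pc: "pC c = Some pc" using C.nonroot c rC_def by blast
      have pcV: "pc \<in> VC" using C.par_in c pc by blast
      have "depth VC pC pc = k" using C.depth_child[OF c(1) pc] c by simp
      then obtain pb where pb: "pb \<in> VB" "pc = g pb" using Suc pcV by blast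
      have bj: "bij_betw (Sg pb (g pb)) (ch VB pB pb) (ch VC pC (g pb))" using Sg[OF relg[OF pb(1)]] by blast
      have "c \<in> ch VC pC (g pb)" using c pc pb by (simp add: ch_def)
      then obtain b where b: "b \<in> ch VB pB pb" "Sg pb (g pb) b = c" using bj
        by (metis bij_betw_def imageE)
      have "g b = c" using g_child[of b pb] b by (simp add: ch_def)
      then show "c \<in> g ` VB" using b by (auto simp: ch_def)
    qed
  qed
  have "g ` VB = VC" using gV surj_k by blast
  then have bij: "bij_betw g VB VC" using inj by (simp add: bij_betw_def)
  have arcs: "(x, y) \<in> arcs VB pB \<longleftrightarrow> (g x, g y) \<in> arcs VC pC" if xy: "x \<in> VB" "y \<in> VB" for x y
  proof
    assume "(x, y) \<in> arcs VB pB"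
    then have "pB x = Some y" by (simp add: arcs_def)
    then show "(g x, g y) \<in> arcs VC pC" using g_ch[OF xy(1)] by (simp add: ch_def arcs_def)
  next
    assume a: "(g x, g y) \<in> arcs VC pC"
    show "(x, y) \<in> arcs VB pB"
    proof (cases "x = rB")
      case True
      then show ?thesis using a g_root rC by (simp add: arcs_def)
    next
      case False
      then obtain px where px: "pB x = Some px" using B.nonroot xy rB_def by blast
      have "pC (g x) = Some (g px)" using g_ch[OF xy(1) px] by (simp add: ch_def)
      then have "g y = g px" using a by (simp add: arcs_def)
      then have "y = px" using inj xy B.par_in[OF xy(1) px] by (meson inj_onD)
      then show ?thesis using px xy by (simp add: arcs_def)
    qed
  qed
  show ?thesis unfolding tree_iso_def using bij arcs by blast
qed


theorem mainTheorem11: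
  fixes VA :: "'a set" and pA :: "'a \<Rightarrow> 'a option"
    and VB :: "'b set" and pB :: "'b \<Rightarrow> 'b option"
    and VC :: "'c set" and pC :: "'c \<Rightarrow> 'c option"
  assumes "is_tree VA pA" and "is_tree VB pB" and "is_tree VC pC"
    and "infinite VA"
    and "tree_iso (tree_prod_verts VA pA VB pB) (tree_prod_par pA pB)
                  (tree_prod_verts VA pA VC pC) (tree_prod_par pA pC)"
  shows "tree_iso VB pB VC pC"
proof -
  have A: "tr VA pA" and B: "tr VB pB" and C: "tr VC pC"
    using assms(1-3) by (simp_all add: tr_def)
  interpret A: tr VA pA by (rule A)
  interpret B: tr VB pB by (rule B)
  interpret C: tr VC pC by (rule C)
  define PB where "PB = tree_prod_verts VA pA VB pB"
  define PC where "PC = tree_prod_verts VA pA VC pC"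
  define qB where "qB = tree_prod_par pA pB"
  define qC where "qC = tree_prod_par pA pC"
  obtain f where f: "bij_betw f PB PC"
    and farc: "\<forall>x\<in>PB. \<forall>y\<in>PB. (x, y) \<in> arcs PB qB \<longleftrightarrow> (f x, f y) \<in> arcs PC qC"
    using assms(5) unfolding tree_iso_def PB_def PC_def qB_def qC_def by blast
  have neA: "VA \<noteq> {}" using assms(4) by auto
  define rA where "rA = rt VA pA"
  have rA: "rA \<in> VA" "pA rA = None" "depth VA pA rA = 0"
    using A.root[OF neA] A.depth_root[OF neA] by (auto simp: rA_def)
  have rootB: "(rA, rt VB pB) \<in> PB" if "VB \<noteq> {}"
    using rA B.root[OF that] B.depth_root[OF that] by (simp add: PB_def tree_prod_verts_def)
  have rootC: "(rA, rt VC pC) \<in> PC" if "VC \<noteq> {}"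
    using rA C.root[OF that] C.depth_root[OF that] by (simp add: PC_def tree_prod_verts_def)
  show ?thesis
  proof (cases "VB = {}")
    case True
    then have "PB = {}" by (simp add: PB_def tree_prod_verts_def)
    then have "PC = {}" using f by (simp add: bij_betw_def)
    then have "VC = {}" using rootC by blast
    then show ?thesis using True unfolding tree_iso_def
      by (intro exI[of _ "\<lambda>_. undefined"]) (simp add: bij_betw_def)
  next
    case neB: False
    have neC: "VC \<noteq> {}"
    proof
      assume "VC = {}"
      then have "PC = {}" by (simp add: PC_def tree_prod_verts_def)
      then have "PB = {}" using f by (simp add: bij_betw_def)
      then show False using rootB neB by blast
    qed
    define rB where "rB = rt VB pB"
    define rC where "rC = rt VC pC"
    have rB: "rB \<in> VB" "pB rB = None" "depth VB pB rB = 0"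
      using B.root[OF neB] B.depth_root[OF neB] by (auto simp: rB_def)
    have rC: "rC \<in> VC" "pC rC = None" "depth VC pC rC = 0"
      using C.root[OF neC] C.depth_root[OF neC] by (auto simp: rC_def)
    have z0: "(rA, rB) \<in> PB" using rootB neB by (simp add: rB_def)
    obtain a' c' where ac: "f (rA, rB) = (a', c')" by (cases "f (rA, rB)")
    have acP: "(a', c') \<in> PC" using f z0 ac by (metis bij_betw_apply)
    then have ac': "a' \<in> VA" "c' \<in> VC" "depth VA pA a' = depth VC pC c'"
      by (auto simp: PC_def tree_prod_verts_def)
    have none: "qC (a', c') = None"
    proof (rule ccontr)
      assume "qC (a', c') \<noteq> None"
      then obtain za zc where z: "qC (a', c') = Some (za, zc)" by auto
      then have pz: "pA a' = Some za" "pC c' = Some zc" by (auto simp: qC_def par_prod)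
      have zV: "za \<in> VA" "zc \<in> VC" using A.par_in C.par_in ac' pz by blast+
      have "depth VA pA za = depth VC pC zc"
        using A.depth_child[OF ac'(1) pz(1)] C.depth_child[OF ac'(2) pz(2)] ac'(3) by simp
      then have zP: "(za, zc) \<in> PC" using zV by (simp add: PC_def tree_prod_verts_def)
      then obtain w where w: "w \<in> PB" "f w = (za, zc)" using f by (metis bij_betw_def imageE)
      have "(f (rA, rB), f w) \<in> arcs PC qC" using ac acP z w by (simp add: arcs_def)
      then have "((rA, rB), w) \<in> arcs PB qB" using farc z0 w(1) by blast
      then have "qB (rA, rB) = Some w" by (simp add: arcs_def)
      moreover have "qB (rA, rB) = None" using rA by (simp add: qB_def par_prod_None)
      ultimately show False by simp
    qed
    have none': "pA a' = None \<or> pC c' = None" using none by (simp add: qC_def par_prod_None)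
    have "a' = rA \<and> c' = rC"
    proof (cases "pA a' = None")
      case True
      then have "a' = rA" using A.is_root ac' rA_def by blast
      then have "depth VC pC c' = 0" using ac' rA by simp
      then show ?thesis using C.depth0 ac' \<open>a' = rA\<close> rC_def by blast
    next
      case False
      then have "pC c' = None" using none' by (cases "pA a'") simp_all
      then have "c' = rC" using C.is_root ac' rC_def by blast
      then have "depth VA pA a' = 0" using ac' rC by simp
      then show ?thesis using A.depth0 ac' \<open>c' = rC\<close> rA_def by blast
    qed
    then have fz: "f (rA, rB) = (rA, rC)" using ac by simp
    have eqn: "ttyp VB pB n rB = ttyp VC pC n rC" for n
    proof -
      have "tm n (ttyp VA pA n rA) (ttyp VB pB n rB) = ttyp PB qB n (rA, rB)"
        using typ_prod[OF A B z0[unfolded PB_def]] by (simp add: PB_def qB_def)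
      also have "\<dots> = ttyp PC qC n (f (rA, rB))"
        using typ_iso[OF f farc z0] by simp
      also have "\<dots> = tm n (ttyp VA pA n rA) (ttyp VC pC n rC)"
        unfolding fz using typ_prod[OF A C rootC[OF neC, unfolded PC_def]] by (simp add: PC_def qC_def rC_def)
      finally show ?thesis
        using cancel[OF A.full_root[OF assms(4)] bnd_typ bnd_typ] by (simp add: rA_def)
    qed
    show ?thesis
      by (rule iso_from_types[OF B C neB neC]) (use eqn in \<open>simp add: rB_def rC_def\<close>)
  qed
qed

end
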